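(* Let $l\ge 3$ and let $V_l$ be the set of Hirzebruch-Jung continued fractions $[n_1,\dots,n_l]$ of length $l$ (all $n_j\ge 2$ integers) satisfying $-1\le q_1+q_l-q\le 1$. Then: (1) no element of the form $[2,n_2,\dots,n_{l-1},2]$ lies in $V_l$; (2) if $n_1\ge 3$ and $n_l\ge 3$, then $[n_1,\dots,n_l]\notin V_l$; (3) no element of $V_l$ satisfies $\sum_{j=1}^l n_j=3l-4$.
   Context: For $[n_1,\dots,n_l]$ let $M(-n_1,\dots,-n_l)$ be the $l\times l$ tridiagonal symmetric matrix with diagonal entries $-n_1,\dots,-n_l$, entries $1$ directly above and below the diagonal, and $0$ elsewhere. Put $q=|\det M(-n_1,\dots,-n_l)|$, $q_1=|\det M(-n_2,\dots,-n_l)|$, $q_l=|\det M(-n_1,\dots,-n_{l-1})|$. *)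

theory Defs
  imports "Jordan_Normal_Form.Determinant"
begin

definition tridiag :: "int list \<Rightarrow> int mat" where
  "tridiag ns = mat (length ns) (length ns)
     (\<lambda>(i,j). if i = j then - (ns ! i) else if i = j + 1 \<or> j = i + 1 then 1 else 0)"

definition qdet :: "int list \<Rightarrow> int" where
  "qdet ns = \<bar>det (tridiag ns)\<bar>"

text \<open>q = qdet ns, q_1 = qdet (tl ns) (drop n_1), q_l = qdet (butlast ns) (drop n_l).\<close>
definition V :: "nat \<Rightarrow> int list set" where
  "V l = {ns. length ns = l \<and> (\<forall>n \<in> set ns. n \<ge> 2) \<and>
            -1 \<le> qdet (tl ns) + qdet (butlast ns) - qdet ns \<and>
            qdet (tl ns) + qdet (butlast ns) - qdet ns \<le> 1}"

end

theory Submission imports Defs begin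

datatype m2 = M2 int int int int

fun mmul :: "m2 \<Rightarrow> m2 \<Rightarrow> m2" where
  "mmul (M2 a b c d) (M2 e f g h) = M2 (a*e+b*g) (a*f+b*h) (c*e+d*g) (c*f+d*h)"

definition Am :: "int \<Rightarrow> m2" where "Am n = M2 n (-1) 1 0"

fun cf :: "int list \<Rightarrow> m2" where
  "cf [] = M2 1 0 0 1"
| "cf (n#xs) = mmul (Am n) (cf xs)"

fun e11 :: "m2 \<Rightarrow> int" where "e11 (M2 a b c d) = a"
fun mdet :: "m2 \<Rightarrow> int" where "mdet (M2 a b c d) = a*d - b*c"

definition K :: "int list \<Rightarrow> int" where "K xs = e11 (cf xs)"

lemma mmul_assoc: "mmul (mmul x y) z = mmul x (mmul y z)"
  by (cases x; cases y; cases z) (simp add: algebra_simps)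

lemma mmul_id: "mmul (M2 1 0 0 1) x = x" by (cases x) simp

lemma cf_append: "cf (xs @ ys) = mmul (cf xs) (cf ys)"
  by (induction xs) (simp_all add: mmul_id mmul_assoc)

lemma mdet_mmul: "mdet (mmul x y) = mdet x * mdet y"
  by (cases x; cases y) (simp add: algebra_simps)

lemma mdet_cf: "mdet (cf xs) = 1"
  by (induction xs) (simp_all add: mdet_mmul Am_def)

lemma cf_inv:
  assumes "xs \<noteq> []" "\<forall>n\<in>set xs. n \<ge> 2" "cf xs = M2 m p q r"
  shows "m + p \<ge> q + r \<and> q + r \<ge> 1 \<and> m \<ge> q + 1 \<and> r - p \<ge> 1 \<and> r \<le> 0"
  using assms
proof (induction xs arbitrary: m p q r)
  case Nil then show ?case by simp
next
  case (Cons b xs)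
  show ?case
  proof (cases "xs = []")
    case True then show ?thesis using Cons.prems by (auto simp: Am_def)
  next
    case False
    obtain m0 p0 q0 r0 where c0: "cf xs = M2 m0 p0 q0 r0" by (cases "cf xs")
    have IH: "m0 + p0 \<ge> q0 + r0 \<and> q0 + r0 \<ge> 1 \<and> m0 \<ge> q0 + 1 \<and> r0 - p0 \<ge> 1 \<and> r0 \<le> 0"
      using Cons.IH[OF False _ c0] Cons.prems by auto
    have b: "b \<ge> 2" using Cons.prems by auto
    have e: "m = b*m0 - q0" "p = b*p0 - r0" "q = m0" "r = p0"
      using Cons.prems(3) c0 by (auto simp: Am_def)
    have h1: "(b-1)*(m0+p0) \<ge> 1*(m0+p0)" by (rule mult_right_mono) (use b IH in auto)
    have h2: "(b-1)*m0 \<ge> 1*m0" by (rule mult_right_mono) (use b IH in auto)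
    have h3: "(b-1)*(-p0) \<ge> 1*(-p0)" by (rule mult_right_mono) (use b IH in auto)
    have h1': "b*m0 + b*p0 \<ge> 2*m0 + 2*p0" using h1 by (simp add: algebra_simps)
    have h2': "b*m0 \<ge> 2*m0" using h2 by (simp add: algebra_simps)
    have h3': "b*p0 \<le> 2*p0" using h3 by (simp add: algebra_simps)
    show ?thesis unfolding e using IH h1' h2' h3' by linarith
  qed
qed

lemma K_pos: "\<forall>n\<in>set xs. n \<ge> 2 \<Longrightarrow> K xs \<ge> 1"
proof (cases "xs = []")
  case True then show ?thesis by (simp add: K_def)
next
  case False
  assume a: "\<forall>n\<in>set xs. n \<ge> 2"
  obtain m p q r where c: "cf xs = M2 m p q r" by (cases "cf xs")
  from cf_inv[OF False a c] show ?thesis by (simp add: K_def c)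
qed

lemma K_simps: "K [] = 1" "K [a] = a" "K (a#b#r) = a * K (b#r) - K r"
proof -
  show "K [] = 1" "K [a] = a" by (simp_all add: K_def Am_def)
  obtain m p q s where c: "cf r = M2 m p q s" by (cases "cf r")
  show "K (a#b#r) = a * K (b#r) - K r" by (simp add: K_def Am_def c)
qed

lemma tridiag_carrier: "tridiag ns \<in> carrier_mat (length ns) (length ns)"
  by (simp add: tridiag_def)

lemma del00: "mat_delete (tridiag (a#ns)) 0 0 = tridiag ns"
  by (rule eq_matI) (auto simp: mat_delete_def tridiag_def)

lemma del10: "mat_delete (mat_delete (tridiag (a#b#ns)) 1 0) 0 0 = tridiag ns"
  by (rule eq_matI) (auto simp: mat_delete_def tridiag_def)

lemma det_tridiag: "det (tridiag ns) = (-1)^length ns * K ns"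
proof (induction ns rule: induct_list012)
  case 1
  then show ?case by (simp add: K_simps tridiag_def)
next
  case (2 a)
  have "det (tridiag [a]) = (\<Sum>i<1. tridiag [a] $$ (i,0) * cofactor (tridiag [a]) i 0)"
    using laplace_expansion_column[OF tridiag_carrier[of "[a]"], of 0] by simp
  also have "\<dots> = - a * det (mat_delete (tridiag [a]) 0 0)"
    by (simp add: cofactor_def tridiag_def)
  also have "\<dots> = -a" using del00[of a "[]"] by (simp add: tridiag_def)
  finally show ?case by (simp add: K_simps)
next
  case (3 a b r)
  let ?T = "tridiag (a#b#r)"
  let ?n = "Suc (Suc (length r))"
  have "det ?T = (\<Sum>i<?n. ?T $$ (i,0) * cofactor ?T i 0)"
    using laplace_expansion_column[OF tridiag_carrier[of "a#b#r"], of 0] by simp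
  also have "\<dots> = (\<Sum>i\<in>{0,1}. ?T $$ (i,0) * cofactor ?T i 0)"
    by (rule sum.mono_neutral_right) (auto simp: tridiag_def)
  also have "\<dots> = -a * det (tridiag (b#r)) - det (mat_delete ?T 1 0)"
    proof -
    have "?T $$ (0,0) = -a" "?T $$ (1,0) = 1" by (simp_all add: tridiag_def)
    then show ?thesis by (simp add: cofactor_def del00)
  qed
  also have "det (mat_delete ?T 1 0) = det (tridiag r)"
  proof -
    let ?B = "mat_delete ?T 1 0"
    have Bc: "?B \<in> carrier_mat (Suc (length r)) (Suc (length r))"
      using mat_delete_carrier[OF tridiag_carrier[of "a#b#r"]] by simp
    have "det ?B = (\<Sum>j<Suc (length r). ?B $$ (0,j) * cofactor ?B 0 j)"
      using laplace_expansion_row[OF Bc, of 0] by simp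
    also have "\<dots> = (\<Sum>j\<in>{0}. ?B $$ (0,j) * cofactor ?B 0 j)"
      by (rule sum.mono_neutral_right) (auto simp: tridiag_def mat_delete_def)
    also have "\<dots> = det (tridiag r)"
      proof -
      have "?B $$ (0,0) = 1" by (simp add: tridiag_def mat_delete_def)
      then show ?thesis using del10[of a b r] by (simp add: cofactor_def)
    qed
    finally show ?thesis .
  qed
  finally show ?case using 3 by (simp add: K_simps algebra_simps)
qed

lemma qdet_K: "\<forall>n\<in>set ns. n \<ge> 2 \<Longrightarrow> qdet ns = K ns"
  using K_pos[of ns] by (simp add: qdet_def det_tridiag abs_mult power_abs)

lemma K_frames:
  assumes "cf mid = M2 m p q r"
  shows "K (mid@[c]) = m*c + p" "K (a#mid) = a*m - q"
        "K (a#mid@[c]) = (a*m - q)*c + a*p - r"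
  using assms by (simp_all add: K_def cf_append Am_def algebra_simps)

lemma K_butlast:
  assumes "mid \<noteq> []" "cf mid = M2 m p q r"
  shows "K (a # butlast mid) = -a*p + r"
proof -
  obtain bs e where mid: "mid = bs @ [e]" using assms(1) by (cases mid rule: rev_cases) auto
  obtain m0 p0 q0 r0 where c: "cf bs = M2 m0 p0 q0 r0" by (cases "cf bs")
  have "cf mid = M2 (m0*e + p0) (-m0) (q0*e+r0) (-q0)" using c by (simp add: mid cf_append Am_def)
  then have "p = -m0" "r = -q0" using assms(2) by auto
  then show ?thesis using c by (simp add: mid K_def Am_def)
qed

lemma K_tl:
  assumes "mid \<noteq> []" "cf mid = M2 m p q r"
  shows "K (tl mid @ [c]) = c*q + r"
proof -
  obtain e bs where mid: "mid = e # bs" using assms(1) by (cases mid) auto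
  obtain m0 p0 q0 r0 where c: "cf bs = M2 m0 p0 q0 r0" by (cases "cf bs")
  have "cf mid = M2 (e*m0 - q0) (e*p0 - r0) m0 p0" using c by (simp add: mid Am_def)
  then have "q = m0" "r = p0" using assms(2) by auto
  then show ?thesis using c by (simp add: mid K_def cf_append Am_def algebra_simps)
qed

definition F :: "int list \<Rightarrow> int" where "F ns = K (tl ns) + K (butlast ns) - K ns"

lemma F_frame:
  assumes "cf mid = M2 m p q r"
  shows "F (a#mid@[c]) = m*c + p + (a*m - q) - ((a*m - q)*c + a*p - r)"
  using K_frames(1)[OF assms, where c=c] K_frames(2)[OF assms, where a=a] K_frames(3)[OF assms, where a=a and c=c] by (simp add: F_def butlast_append)

lemma part1:
  assumes "mid \<noteq> []" "\<forall>n\<in>set mid. n \<ge> 2"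
  shows "F (2#mid@[2]) \<ge> 2"
proof -
  obtain m p q r where c: "cf mid = M2 m p q r" by (cases "cf mid")
  from cf_inv[OF assms c] F_frame[OF c, where a=2 and c=2] show ?thesis by (simp add: algebra_simps)
qed

lemma part2:
  assumes "mid \<noteq> []" "\<forall>n\<in>set mid. n \<ge> 2" "a \<ge> 3" "c \<ge> 3"
  shows "F (a#mid@[c]) \<le> -2"
proof -
  obtain m p q r where cc: "cf mid = M2 m p q r" by (cases "cf mid")
  note inv = cf_inv[OF assms(1,2) cc]
  have d: "m*r - p*q = 1" using mdet_cf[of mid] cc by simp
  define f where "f = F (a#mid@[c])"
  have fe: "f = m*c + p + (a*m - q) - ((a*m - q)*c + a*p - r)" using F_frame[OF cc] f_def by simp
  have key: "f*m = m*m + 1 - ((a-1)*m - q)*((c-1)*m + p)"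
  proof -
    have "f*m - (m*m + 1 - ((a-1)*m - q)*((c-1)*m + p)) = m*r - p*q - 1"
      unfolding fe by (simp add: algebra_simps)
    then show ?thesis using d by linarith
  qed
  have m0: "m \<ge> 2" using inv by linarith
  have "(a-1)*m \<ge> 2*m" by (rule mult_right_mono) (use assms m0 in auto)
  then have u: "(a-1)*m - q \<ge> m + 1" using inv by linarith
  have "(c-1)*m \<ge> 2*m" by (rule mult_right_mono) (use assms m0 in auto)
  then have v: "(c-1)*m + p \<ge> m + 1" using inv by linarith
  have "((a-1)*m - q)*((c-1)*m + p) \<ge> (m+1)*(m+1)"
    by (rule mult_mono) (use u v m0 in auto)
  then have "f*m \<le> (-2)*m" using key by (simp add: algebra_simps)
  then have "f \<le> -2" using m0 by (intro mult_right_le_imp_le[of f m "-2"]) auto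
  then show ?thesis by (simp add: f_def)
qed

lemma red_right:
  assumes "mid \<noteq> []"
  shows "F (a#mid@[2]) = F ((a-1)#mid)"
proof -
  obtain m p q r where cc: "cf mid = M2 m p q r" by (cases "cf mid")
  have "F ((a-1)#mid) = K mid + K ((a-1) # butlast mid) - K ((a-1)#mid)"
    using assms by (simp add: F_def)
  also have "\<dots> = m + (-(a-1)*p + r) - ((a-1)*m - q)"
    using K_butlast[OF assms cc, where a="a-1"] K_frames(2)[OF cc, where a="a-1"] by (simp add: algebra_simps K_def cc)
  finally show ?thesis using F_frame[OF cc, where a=a and c=2] by (simp add: algebra_simps)
qed

lemma red_left:
  assumes "mid \<noteq> []"
  shows "F (2#mid@[c]) = F (mid@[c-1])"
proof -
  obtain m p q r where cc: "cf mid = M2 m p q r" by (cases "cf mid")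
  have "F (mid@[c-1]) = K (tl mid @ [c-1]) + K mid - K (mid@[c-1])"
    using assms by (simp add: F_def)
  also have "\<dots> = ((c-1)*q + r) + m - (m*(c-1) + p)"
    using K_tl[OF assms cc, where c="c-1"] K_frames(1)[OF cc, where c="c-1"] by (simp add: algebra_simps K_def cc)
  finally show ?thesis using F_frame[OF cc, where a=2 and c=c] by (simp add: algebra_simps)
qed

lemma decomp:
  assumes "length ns \<ge> 3"
  obtains a mid c where "ns = a#mid@[c]" "mid \<noteq> []"
proof -
  obtain a t where t: "ns = a # t" using assms by (cases ns) auto
  obtain mid c where "t = mid @ [c]" using assms t by (cases t rule: rev_cases) auto
  moreover have "mid \<noteq> []" using assms t calculation by auto
  ultimately show ?thesis using that t by blast
qed

lemma in_set_tlD': "x \<in> set (tl xs) \<Longrightarrow> x \<in> set xs" by (cases xs) auto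

lemma V_char: "ns \<in> V l \<longleftrightarrow> length ns = l \<and> (\<forall>n\<in>set ns. n \<ge> 2) \<and> -1 \<le> F ns \<and> F ns \<le> 1"
proof -
  have "(\<forall>n\<in>set ns. n \<ge> 2) \<Longrightarrow> qdet (tl ns) + qdet (butlast ns) - qdet ns = F ns"
    unfolding F_def by (subst (1 2 3) qdet_K) (auto dest: in_set_tlD' in_set_butlastD)
  then show ?thesis unfolding V_def by auto
qed

lemma ends:
  assumes "ns \<in> V l" "l \<ge> 3"
  obtains a mid c where "ns = a#mid@[c]" "mid \<noteq> []" "\<forall>n\<in>set mid. n \<ge> 2"
     "(a = 2 \<and> c \<ge> 3) \<or> (a \<ge> 3 \<and> c = 2)"
proof -
  have v: "length ns = l" "\<forall>n\<in>set ns. n \<ge> 2" "-1 \<le> F ns" "F ns \<le> 1"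
    using assms(1) V_char by auto
  obtain a mid c where d: "ns = a#mid@[c]" "mid \<noteq> []" using decomp v(1) assms(2) by metis
  have m: "\<forall>n\<in>set mid. n \<ge> 2" "a \<ge> 2" "c \<ge> 2" using v(2) d by auto
  have "\<not> (a = 2 \<and> c = 2)" using part1[OF d(2) m(1)] v d by auto
  moreover have "\<not> (a \<ge> 3 \<and> c \<ge> 3)" using part2[OF d(2) m(1), of a c] v d by auto
  ultimately have "(a = 2 \<and> c \<ge> 3) \<or> (a \<ge> 3 \<and> c = 2)" using m by auto
  then show ?thesis using that[OF d m(1)] by blast
qed

lemma part3:
  "length ns = l \<Longrightarrow> l \<ge> 3 \<Longrightarrow> ns \<in> V l \<Longrightarrow> sum_list ns \<ge> 3 * int l - 3"
proof (induction l arbitrary: ns rule: less_induct)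
  case (less l)
  show ?case
  proof (cases "l = 3")
    case True
    have "\<forall>n\<in>set ns. n \<ge> 2" using less.prems(3) unfolding V_char by blast
    then have "sum_list ns \<ge> sum_list (map (\<lambda>_. 2::int) ns)"
      by (induction ns) auto
    then show ?thesis using True less.prems by (simp add: sum_list_triv)
  next
    case False
    then have l4: "l \<ge> 4" using less.prems by auto
    obtain a mid c where d: "ns = a#mid@[c]" "mid \<noteq> []" "\<forall>n\<in>set mid. n \<ge> 2"
      and ac: "(a = 2 \<and> c \<ge> 3) \<or> (a \<ge> 3 \<and> c = 2)"
      using ends[OF less.prems(3,2)] by blast
    have FV: "-1 \<le> F ns" "F ns \<le> 1" using less.prems(3) unfolding V_char by blast+
    from ac show ?thesis
    proof
      assume h: "a = 2 \<and> c \<ge> 3"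
      let ?L = "mid @ [c-1]"
      have "F ?L = F ns" using red_left[OF d(2), of c] d h by simp
      moreover have lenL: "length ?L = l - 1" using d less.prems(1) by simp
      moreover have "\<forall>n\<in>set ?L. n \<ge> 2" using d h by auto
      ultimately have "?L \<in> V (l-1)" unfolding V_char using FV by simp
      then have "sum_list ?L \<ge> 3 * int (l-1) - 3"
        using less.IH[of "l-1" ?L] l4 lenL by simp
      moreover have "sum_list ns = sum_list ?L + 3" using d h by simp
      ultimately show ?thesis using l4 by (simp add: of_nat_diff)
    next
      assume h: "a \<ge> 3 \<and> c = 2"
      let ?L = "(a-1) # mid"
      have "F ?L = F ns" using red_right[OF d(2), of a] d h by simp
      moreover have lenL: "length ?L = l - 1" using d less.prems(1) by simp
      moreover have "\<forall>n\<in>set ?L. n \<ge> 2" using d h by auto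
      ultimately have "?L \<in> V (l-1)" unfolding V_char using FV by simp
      then have "sum_list ?L \<ge> 3 * int (l-1) - 3"
        using less.IH[of "l-1" ?L] l4 lenL by simp
      moreover have "sum_list ns = sum_list ?L + 3" using d h by simp
      ultimately show ?thesis using l4 by (simp add: of_nat_diff)
    qed
  qed
qed

theorem lemma2p7:
  fixes l :: nat
  assumes "l \<ge> 3"
  shows "(\<forall>ns \<in> V l. \<not> (hd ns = 2 \<and> last ns = 2))
       \<and> (\<forall>ns. length ns = l \<and> (\<forall>n \<in> set ns. n \<ge> 2) \<and> hd ns \<ge> 3 \<and> last ns \<ge> 3 \<longrightarrow> ns \<notin> V l)
       \<and> (\<forall>ns \<in> V l. sum_list ns \<noteq> 3 * int l - 4)"
proof (intro conjI ballI allI impI)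
  fix ns assume "ns \<in> V l"
  then obtain a mid c where "ns = a#mid@[c]"
      "(a = 2 \<and> c \<ge> 3) \<or> (a \<ge> 3 \<and> c = 2)" using ends[OF _ assms] by blast
  then show "\<not> (hd ns = 2 \<and> last ns = 2)" by auto
next
  fix ns :: "int list" assume h: "length ns = l \<and> (\<forall>n \<in> set ns. n \<ge> 2) \<and> hd ns \<ge> 3 \<and> last ns \<ge> 3"
  show "ns \<notin> V l"
  proof
    assume "ns \<in> V l"
    then obtain a mid c where "ns = a#mid@[c]"
        "(a = 2 \<and> c \<ge> 3) \<or> (a \<ge> 3 \<and> c = 2)" using ends[OF _ assms] by blast
    then show False using h by auto
  qed
next
  fix ns assume "ns \<in> V l"
  moreover have "length ns = l" using calculation V_char by auto
  ultimately have "sum_list ns \<ge> 3 * int l - 3" using part3[of ns l] assms by simp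
  then show "sum_list ns \<noteq> 3 * int l - 4" by auto
qed

end
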